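(* There exists $C$ depending only on $\theta_{\mathcal T}$ and $\ell_{\mathcal D}$ such that $$|T|\le|K|\le C\,|T|\qquad\text{for all }K\in\mathcal M\text{ and all }T\in\mathcal T\text{ with }T\subset K,$$ where $|\cdot|$ denotes the Lebesgue measure.
   Context: $\Omega\subset\mathbb R^d$ ($d\in\{2,3\}$) is a connected bounded open polyhedral set. Discretization $\mathcal D$: cells $\mathcal M$ (disjoint open polyhedra with closures covering $\bar\Omega$, each star-shaped w.r.t. a point $x_K$), faces $\mathcal F$ ($\mathcal F_K$ those of $K$), vertices $\mathcal V$ at $x_s$ ($\mathcal V_K$ those of $K$, $\mathcal V_\sigma$ those of face $\sigma$, $\mathcal M_s$ cells containing $s$); if $d=3$, each face $\sigma$ has edges $\mathcal E_\sigma$ and a center $x_\sigma=\sum_{s\in\mathcal V_\sigma}\beta_{\sigma,s}x_s$ (convex weights), and is the union of the triangles formed by $x_\sigma$ and its edges. Simplicial submesh $\mathcal T$: for $d=2$, triangles with vertices $x_K$ and $x_s$, $s\in\mathcal V_\sigma$, for $K\in\mathcal M$, $\sigma\in\mathcal F_K$; for $d=3$, tetrahedra with vertices $x_K$, $x_\sigma$ and the two endpoints of $e\in\mathcal E_\sigma$, $\sigma\in\mathcal F_K$. $\theta_{\mathcal T}=\max_{T\in\mathcal T}h_T/\rho_T$ with $h_T$ the diameter and $\rho_T$ the insphere diameter of $T$; $\ell_{\mathcal D}=\max(\max_K\#\mathcal V_K,\max_s\#\mathcal M_s,\max_K\#\mathcal F_K)$. *)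

theory Defs
  imports "HOL-Analysis.Analysis"
begin

definition open_polyhedral :: "'a::euclidean_space set \<Rightarrow> bool" where
  "open_polyhedral S \<longleftrightarrow> open S \<and> S = interior (closure S) \<and>
     (\<exists>P. finite P \<and> (\<forall>p\<in>P. polytope p) \<and> closure S = \<Union>P)"

text \<open>Vertices are identified with their positions x_s.
  Parameters: Omega, cells M, faces F, faces of a cell FK, vertices of a face Vf,
  edges of a face Ef (d=3), cell centers xK, face centers xf (d=3), weights beta (d=3).\<close>
definition discretization ::
  "'a::euclidean_space set \<Rightarrow> 'a set set \<Rightarrow> 'a set set \<Rightarrow> ('a set \<Rightarrow> 'a set set)
   \<Rightarrow> ('a set \<Rightarrow> 'a set) \<Rightarrow> ('a set \<Rightarrow> 'a set set) \<Rightarrow> ('a set \<Rightarrow> 'a) \<Rightarrow> ('a set \<Rightarrow> 'a)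
   \<Rightarrow> ('a set \<Rightarrow> 'a \<Rightarrow> real) \<Rightarrow> bool" where
  "discretization \<Omega> M F FK Vf Ef xK xf \<beta> \<longleftrightarrow>
     open_polyhedral \<Omega> \<and> connected \<Omega> \<and> \<Omega> \<noteq> {} \<and> bounded \<Omega> \<and>
     finite M \<and> (\<forall>K\<in>M. open_polyhedral K \<and> K \<noteq> {}) \<and> pairwise disjnt M \<and>
     closure \<Omega> = \<Union>(closure ` M) \<and>
     (\<forall>K\<in>M. xK K \<in> K \<and> (\<forall>y\<in>K. closed_segment (xK K) y \<subseteq> K)) \<and>
     finite F \<and> F = \<Union>(FK ` M) \<and> pairwise disjnt F \<and>
     (\<forall>\<sigma>\<in>F. \<sigma> \<noteq> {} \<and> aff_dim \<sigma> = int DIM('a) - 1 \<and>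
        openin (top_of_set (affine hull \<sigma>)) \<sigma> \<and> finite (Vf \<sigma>) \<and> Vf \<sigma> \<noteq> {}) \<and>
     (\<forall>K\<in>M. frontier K = \<Union>(closure ` FK K)) \<and>
     (DIM('a) = 2 \<longrightarrow>
        (\<forall>\<sigma>\<in>F. \<exists>a b. a \<noteq> b \<and> Vf \<sigma> = {a, b} \<and> \<sigma> = open_segment a b)) \<and>
     (DIM('a) = 3 \<longrightarrow>
        (\<forall>\<sigma>\<in>F. finite (Ef \<sigma>) \<and> (\<forall>e\<in>Ef \<sigma>. e \<subseteq> Vf \<sigma> \<and> card e = 2) \<and>
           (\<forall>s\<in>Vf \<sigma>. 0 \<le> \<beta> \<sigma> s) \<and> sum (\<beta> \<sigma>) (Vf \<sigma>) = 1 \<and>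
           xf \<sigma> = (\<Sum>s\<in>Vf \<sigma>. \<beta> \<sigma> s *\<^sub>R s) \<and>
           closure \<sigma> = \<Union>{convex hull (insert (xf \<sigma>) e) | e. e \<in> Ef \<sigma>}))"

definition cell_vertices :: "('a set \<Rightarrow> 'a set set) \<Rightarrow> ('a set \<Rightarrow> 'a set) \<Rightarrow> 'a set \<Rightarrow> 'a set" where
  "cell_vertices FK Vf K = \<Union>(Vf ` FK K)"

definition cells_of_vertex :: "'a set set \<Rightarrow> ('a set \<Rightarrow> 'a set set) \<Rightarrow> ('a set \<Rightarrow> 'a set) \<Rightarrow> 'a \<Rightarrow> 'a set set" where
  "cells_of_vertex M FK Vf s = {K\<in>M. s \<in> cell_vertices FK Vf K}"

definition ell_D :: "'a set set \<Rightarrow> 'a set set \<Rightarrow> ('a set \<Rightarrow> 'a set set) \<Rightarrow> ('a set \<Rightarrow> 'a set) \<Rightarrow> nat" where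
  "ell_D M F FK Vf = Max ((\<lambda>K. card (cell_vertices FK Vf K)) ` M \<union>
       (\<lambda>s. card (cells_of_vertex M FK Vf s)) ` (\<Union>(Vf ` F)) \<union> (\<lambda>K. card (FK K)) ` M)"

definition submesh_cell :: "('a::euclidean_space set \<Rightarrow> 'a) \<Rightarrow> ('a set \<Rightarrow> 'a set set) \<Rightarrow> ('a set \<Rightarrow> 'a set)
   \<Rightarrow> ('a set \<Rightarrow> 'a set set) \<Rightarrow> ('a set \<Rightarrow> 'a) \<Rightarrow> 'a set \<Rightarrow> 'a set set" where
  "submesh_cell xK FK Vf Ef xf K =
     (if DIM('a) = 2 then {interior (convex hull (insert (xK K) (Vf \<sigma>))) | \<sigma>. \<sigma> \<in> FK K}
      else {interior (convex hull (insert (xK K) (insert (xf \<sigma>) e))) | \<sigma> e. \<sigma> \<in> FK K \<and> e \<in> Ef \<sigma>})"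

definition submesh :: "'a::euclidean_space set set \<Rightarrow> ('a set \<Rightarrow> 'a) \<Rightarrow> ('a set \<Rightarrow> 'a set set) \<Rightarrow> ('a set \<Rightarrow> 'a set)
   \<Rightarrow> ('a set \<Rightarrow> 'a set set) \<Rightarrow> ('a set \<Rightarrow> 'a) \<Rightarrow> 'a set set" where
  "submesh M xK FK Vf Ef xf = \<Union>((submesh_cell xK FK Vf Ef xf) ` M)"

definition insphere_diam :: "'a::euclidean_space set \<Rightarrow> real" where
  "insphere_diam T = 2 * Sup {r. \<exists>c. ball c r \<subseteq> T}"

definition mesh_regularity :: "'a::euclidean_space set set \<Rightarrow> ereal" where
  "mesh_regularity TT = Sup ((\<lambda>T. if insphere_diam T = 0 then \<infinity>
                                    else ereal (diameter T / insphere_diam T)) ` TT)"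

end

theory Submission imports Defs begin

lemma hyperplane_through:
  fixes Q :: "'a::euclidean_space set"
  assumes "finite Q" "card Q \<le> DIM('a)" "q0 \<in> Q"
  shows "\<exists>u. u \<noteq> 0 \<and> (\<forall>q\<in>Q. u \<bullet> q = u \<bullet> q0)"
proof -
  define S where "S = (\<lambda>q. q - q0) ` Q"
  have fS: "finite S" using assms by (simp add: S_def)
  have "0 \<in> S" using assms by (auto simp: S_def)
  have cS: "card S \<le> card Q" unfolding S_def using assms card_image_le by blast
  have "dim S = dim (insert 0 (S - {0}))" using \<open>0 \<in> S\<close> by (simp add: insert_absorb)
  also have "\<dots> = dim (S - {0})" by (metis dim_insert span_zero)
  also have "\<dots> \<le> card (S - {0})" by (rule dim_le_card[OF span_superset]) (simp add: fS)
  also have "\<dots> = card S - 1" using \<open>0 \<in> S\<close> fS by simp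
  finally have "dim S < DIM('a)" using cS assms(2) \<open>0\<in>S\<close> fS
    by (metis One_nat_def card_gt_0_iff diff_less empty_iff le_trans less_one not_le order_le_less_trans)
  then obtain u where u: "u \<noteq> 0" "span S \<subseteq> {x. u \<bullet> x = 0}" using lowdim_subset_hyperplane by blast
  have "u \<bullet> q = u \<bullet> q0" if "q \<in> Q" for q
  proof -
    have "q - q0 \<in> span S" using that by (auto simp: S_def intro: span_base)
    then show ?thesis using u by (auto simp: inner_diff_right)
  qed
  with u show ?thesis by blast
qed

lemma far_face:
  fixes x :: "'a::euclidean_space"
  assumes "finite Q" "card Q \<le> DIM('a)" "ball c r \<subseteq> convex hull (insert x Q)" "r > 0"
    "p \<in> convex hull Q"
  shows "2 * r \<le> dist x p"
proof -
  have "Q \<noteq> {}" using assms(5) by auto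
  then obtain q0 where q0: "q0 \<in> Q" by blast
  obtain u where u: "u \<noteq> 0" "\<forall>q\<in>Q. u \<bullet> q = u \<bullet> q0" using hyperplane_through[OF assms(1,2) q0] by blast
  define b where "b = u \<bullet> q0"
  have "convex hull Q \<subseteq> {z. u \<bullet> z = b}"
    by (rule hull_minimal) (use u in \<open>auto simp: b_def convex_hyperplane\<close>)
  then have ub: "u \<bullet> p = b" using assms(5) by auto
  define lo where "lo = min b (u \<bullet> x)"
  define hi where "hi = max b (u \<bullet> x)"
  have "convex hull (insert x Q) \<subseteq> {z. u \<bullet> z \<le> hi} \<inter> {z. u \<bullet> z \<ge> lo}"
    by (rule hull_minimal) (use u in \<open>auto simp: b_def lo_def hi_def convex_Int convex_halfspace_le convex_halfspace_ge\<close>)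
  moreover have "cball c r \<subseteq> convex hull (insert x Q)"
  proof -
    have "closed (convex hull (insert x Q))"
      using assms(1) by (simp add: compact_imp_closed finite_imp_compact_convex_hull)
    then show ?thesis using closure_mono[OF assms(3)] assms(4) by (simp add: closure_closed)
  qed
  ultimately have sub: "cball c r \<subseteq> {z. u \<bullet> z \<le> hi} \<inter> {z. u \<bullet> z \<ge> lo}" by blast
  define v where "v = (r / norm u) *\<^sub>R u"
  have nv: "norm v = r" using u assms(4) by (simp add: v_def)
  have "c + v \<in> cball c r" "c - v \<in> cball c r" using nv by (auto simp: dist_norm)
  with sub have "u \<bullet> (c + v) \<le> hi" "u \<bullet> (c - v) \<ge> lo" by blast+
  moreover have "u \<bullet> v = r * norm u" using u by (simp add: v_def power2_norm_eq_inner[symmetric] power2_eq_square)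
  ultimately have "2 * r * norm u \<le> hi - lo" by (simp add: inner_add_right inner_diff_right)
  also have "hi - lo = \<bar>u \<bullet> (x - p)\<bar>" using ub by (auto simp: hi_def lo_def inner_diff_right)
  also have "\<dots> \<le> norm u * norm (x - p)" by (rule Cauchy_Schwarz_ineq2)
  finally show ?thesis using u by (simp add: dist_norm mult.commute)
qed

lemma reg_ball:
  fixes T :: "'a::euclidean_space set"
  assumes "bounded T" "insphere_diam T \<noteq> 0"
  shows "\<exists>c r. ball c r \<subseteq> T \<and> r > 0 \<and> 4 * r > insphere_diam T \<and> insphere_diam T > 0
           \<and> insphere_diam T \<le> diameter T"
proof -
  define R where "R = {r. \<exists>c. ball c r \<subseteq> T}"
  have "0 \<in> R" by (auto simp: R_def)
  have ub: "r \<le> diameter T / 2" if "r \<in> R" for r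
  proof (cases "r > 0")
    case True
    from that obtain c where "ball c r \<subseteq> T" by (auto simp: R_def)
    then have "diameter (ball c r) \<le> diameter T" by (rule diameter_subset) (rule assms(1))
    with True show ?thesis by simp
  next
    case False
    then show ?thesis using diameter_ge_0[OF assms(1)] by simp
  qed
  have bdd: "bdd_above R" using ub by (intro bdd_aboveI[of _ "diameter T / 2"]) auto
  have "Sup R \<ge> 0" using cSup_upper[OF \<open>0 \<in> R\<close> bdd] .
  moreover have "Sup R \<noteq> 0" using assms(2) by (simp add: insphere_diam_def R_def)
  ultimately have pos: "Sup R > 0" by simp
  have "Sup R / 2 < Sup R" using pos by simp
  then obtain r where r: "r \<in> R" "Sup R / 2 < r" using less_cSupE[of "Sup R / 2" R] \<open>0 \<in> R\<close> by blast
  then obtain c where c: "ball c r \<subseteq> T" by (auto simp: R_def)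
  have "Sup R \<le> diameter T / 2" using cSup_least[of R] ub \<open>0 \<in> R\<close> by blast
  then show ?thesis using c r pos
    by (intro exI[of _ c] exI[of _ r]) (auto simp: insphere_diam_def R_def[symmetric])
qed

lemma reg_of_mesh:
  assumes "mesh_regularity TT \<le> ereal \<theta>" "T \<in> TT"
  shows "insphere_diam T \<noteq> 0 \<and> diameter T / insphere_diam T \<le> \<theta>"
proof -
  have "(if insphere_diam T = 0 then \<infinity> else ereal (diameter T / insphere_diam T)) \<le> mesh_regularity TT"
    unfolding mesh_regularity_def using assms(2) by (intro Sup_upper) auto
  then have "(if insphere_diam T = 0 then \<infinity> else ereal (diameter T / insphere_diam T)) \<le> ereal \<theta>"
    using assms(1) by (rule order_trans)
  then show ?thesis by (auto split: if_splits)
qed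

locale starK =
  fixes K :: "'a::euclidean_space set" and x :: 'a
  assumes opn: "open K" and bdd: "bounded K" and xK: "x \<in> K"
    and seg: "\<And>y. y \<in> K \<Longrightarrow> closed_segment x y \<subseteq> K"
begin

lemma connK: "connected K"
proof -
  have "K = \<Union>((\<lambda>y. closed_segment x y) ` K)" using seg xK by auto
  moreover have "connected (\<Union>((\<lambda>y. closed_segment x y) ` K))"
    by (rule connected_Union) (use xK in auto)
  ultimately show ?thesis by simp
qed

lemma ray_out:
  assumes "y \<notin> K" "z \<in> closed_segment y (y + t *\<^sub>R (y - x))" "t \<ge> 0"
  shows "z \<notin> K"
proof
  assume zK: "z \<in> K"
  obtain u where u: "0 \<le> u" "u \<le> 1" "z = (1 - u) *\<^sub>R y + u *\<^sub>R (y + t *\<^sub>R (y - x))"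
    using assms(2) by (auto simp: in_segment)
  define s where "s = u * t"
  have s0: "s \<ge> 0" using u assms(3) by (simp add: s_def)
  have z: "z - x = (1 + s) *\<^sub>R (y - x)" using u by (simp add: s_def algebra_simps)
  define v where "v = 1 / (1 + s)"
  have v: "0 \<le> v" "v \<le> 1" using s0 by (auto simp: v_def)
  have "(1 - v) *\<^sub>R x + v *\<^sub>R z = x + v *\<^sub>R (z - x)" by (simp add: algebra_simps)
  also have "\<dots> = y" using s0 by (simp add: z v_def)
  finally have "y \<in> closed_segment x z" using v by (auto simp: in_segment)
  then show False using seg[OF zK] assms(1) by blast
qed

lemma conn_compl:
  assumes "2 \<le> DIM('a)"
  shows "connected (- K)"
proof -
  obtain B where B: "B > 0" "K \<subseteq> ball x B" using bounded_subset_ballD[OF bdd] by blast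
  define D where "D = - ball x B"
  have cD: "connected D" unfolding D_def
    by (rule connected_complement_bounded_convex) (auto simp: assms)
  obtain v :: 'a where v: "norm v = B" using vector_choose_size B by (metis less_imp_le)
  have pD: "x + v \<in> D" using v by (simp add: D_def dist_norm)
  define S where "S y = closed_segment y (y + (B / norm (y - x)) *\<^sub>R (y - x)) \<union> D" for y
  have DK: "D \<subseteq> - K" using B by (auto simp: D_def)
  have SK: "S y \<subseteq> - K" if "y \<notin> K" for y
    using ray_out[OF that] DK B by (auto simp: S_def)
  have "- K = \<Union>(S ` (- K))"
  proof
    show "- K \<subseteq> \<Union>(S ` (- K))" by (auto simp: S_def)
    show "\<Union>(S ` (- K)) \<subseteq> - K" using SK by auto
  qed
  moreover have "connected (\<Union>(S ` (- K)))"
  proof (rule connected_Union)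
    fix s assume "s \<in> S ` (- K)"
    then obtain y where y: "y \<notin> K" "s = S y" by auto
    have yx: "y \<noteq> x" using y xK by auto
    define w where "w = y + (B / norm (y - x)) *\<^sub>R (y - x)"
    have "w - x = (1 + B / norm (y - x)) *\<^sub>R (y - x)" by (simp add: w_def algebra_simps)
    then have "norm (w - x) = (1 + B / norm (y - x)) * norm (y - x)" using B
      by (simp add: abs_of_nonneg)
    also have "\<dots> = norm (y - x) + B" using yx by (simp add: field_simps)
    finally have "w \<in> D" using B by (simp add: D_def dist_norm norm_minus_commute)
    then show "connected s" using y cD
      by (auto simp: S_def w_def[symmetric] intro!: connected_Un)
  next
    show "\<Inter>(S ` (- K)) \<noteq> {}" using pD by (auto simp: S_def)
  qed
  ultimately show ?thesis by simp
qed

lemma closure_seg: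
  assumes "p \<in> closure K"
  shows "closed_segment x p \<subseteq> closure K"
proof
  fix z assume "z \<in> closed_segment x p"
  then obtain u where u: "0 \<le> u" "u \<le> 1" "z = (1 - u) *\<^sub>R x + u *\<^sub>R p"
    by (auto simp: in_segment)
  define f where "f y = (1 - u) *\<^sub>R x + u *\<^sub>R y" for y
  have "f ` K \<subseteq> closure K"
  proof
    fix w assume "w \<in> f ` K"
    then obtain y where "y \<in> K" "w = f y" by auto
    then have "w \<in> closed_segment x y" using u by (auto simp: in_segment f_def)
    then show "w \<in> closure K" using seg \<open>y \<in> K\<close> closure_subset by blast
  qed
  then have "f ` closure K \<subseteq> closure K"
    by (intro image_closure_subset) (auto simp: f_def intro!: continuous_intros)
  then show "z \<in> closure K" using assms u by (auto simp: f_def)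
qed

lemma farthest:
  "\<exists>z\<in>frontier K. \<forall>y\<in>K. dist x y \<le> dist x z"
proof -
  have c1: "compact (closure K)" using bdd by (simp add: compact_closure)
  have c2: "closure K \<noteq> {}" using xK closure_subset by blast
  obtain z where z: "z \<in> closure K" "\<forall>y\<in>closure K. dist x y \<le> dist x z"
  proof -
    have "continuous_on (closure K) (\<lambda>y. dist x y)" by (intro continuous_intros)
    then show ?thesis using continuous_attains_sup[of "closure K" "\<lambda>y. dist x y"] c1 c2 that by blast
  qed
  have "z \<notin> K"
  proof
    assume zK: "z \<in> K"
    obtain e where e: "e > 0" "ball z e \<subseteq> K" using opn zK open_contains_ball by blast
    show False
    proof (cases "z = x")
      case True
      obtain v :: 'a where v: "norm v = e / 2" using vector_choose_size e by (metis half_gt_zero less_imp_le)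
      have "x + v \<in> K" using e v True by (auto simp: dist_norm)
      then have "dist x (x + v) \<le> dist x z" using z closure_subset by blast
      then show False using True v e by (simp add: dist_norm)
    next
      case False
      define w where "w = z + (e / 2 / norm (z - x)) *\<^sub>R (z - x)"
      have nz: "norm (z - x) > 0" using False by simp
      have "dist z w = e / 2" using nz e by (simp add: w_def dist_norm)
      then have "w \<in> K" using e by auto
      then have le: "dist x w \<le> dist x z" using z closure_subset by blast
      have "w - x = (1 + e / 2 / norm (z - x)) *\<^sub>R (z - x)" by (simp add: w_def algebra_simps)
      then have "norm (w - x) = (1 + e / 2 / norm (z - x)) * norm (z - x)" using e nz
        by (simp add: abs_of_nonneg)
      also have "\<dots> = norm (z - x) + e / 2" using nz by (simp add: field_simps)
      finally show False using le e by (simp add: dist_norm norm_minus_commute)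
    qed
  qed
  then have "z \<in> frontier K" using z opn by (simp add: frontier_def interior_open)
  then show ?thesis using z closure_subset by blast
qed

end

lemma chain_bound:
  fixes A :: "'i \<Rightarrow> 'a::topological_space set" and h :: "'i \<Rightarrow> real"
  assumes conn: "connected S" and SU: "S = \<Union>(A ` I)" and fI: "finite I"
    and cl: "\<And>i. i \<in> I \<Longrightarrow> closed (A i)" and ne: "\<And>i. i \<in> I \<Longrightarrow> A i \<noteq> {}"
    and adj: "\<And>i j. i \<in> I \<Longrightarrow> j \<in> I \<Longrightarrow> A i \<inter> A j \<noteq> {} \<Longrightarrow> h i \<le> c * h j"
    and c1: "c \<ge> 1" and hpos: "\<And>i. i \<in> I \<Longrightarrow> h i \<ge> 0"
    and i: "i \<in> I" and j: "j \<in> I" and cI: "card I \<le> n"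
  shows "h i \<le> c ^ (n * n) * h j"
proof -
  define E where "E = {(a, b). a \<in> I \<and> b \<in> I \<and> A a \<inter> A b \<noteq> {}}"
  have fE: "finite E" using fI by (intro finite_subset[of E "I \<times> I"]) (auto simp: E_def)
  have cE: "card E \<le> n * n"
  proof -
    have "card E \<le> card (I \<times> I)" using fI by (intro card_mono) (auto simp: E_def)
    also have "\<dots> = card I * card I" by (simp add: card_cartesian_product)
    also have "\<dots> \<le> n * n" using cI by (simp add: mult_le_mono)
    finally show ?thesis .
  qed
  have pow: "(j, k) \<in> E ^^ m \<Longrightarrow> h k \<le> c ^ m * h j \<and> k \<in> I" for k m
  proof (induction m arbitrary: k)
    case 0
    then show ?case using j by simp
  next
    case (Suc m)
    have "(j, k) \<in> E ^^ m O E" using Suc.prems by (simp only: relpow.simps)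
    then obtain k' where k': "(j, k') \<in> E ^^ m" "(k', k) \<in> E" by (rule relcompE) auto
    have ih: "h k' \<le> c ^ m * h j" "k' \<in> I" using Suc.IH[OF k'(1)] by auto
    have kI: "k \<in> I" "k' \<in> I" using k'(2) unfolding E_def by auto
    have "A k \<inter> A k' \<noteq> {}" using k'(2) by (auto simp: E_def)
    then have "h k \<le> c * h k'" using adj kI by blast
    also have "\<dots> \<le> c * (c ^ m * h j)" using ih c1 by (intro mult_left_mono) auto
    finally show ?case using kI by simp
  qed
  define R where "R = {k \<in> I. (j, k) \<in> E\<^sup>*}"
  define U where "U = \<Union>(A ` R)"
  define V where "V = \<Union>(A ` (I - R))"
  have "closed U" unfolding U_def using fI cl by (intro closed_Union) (auto simp: R_def)
  moreover have "closed V" unfolding V_def using fI cl by (intro closed_Union) auto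
  moreover have "S \<subseteq> U \<union> V" by (auto simp: SU U_def V_def)
  moreover have "U \<inter> V \<inter> S = {}"
  proof -
    have False if "p \<in> A a" "p \<in> A b" "a \<in> R" "b \<in> I - R" for p a b
    proof -
      have "(a, b) \<in> E" using that by (auto simp: E_def R_def)
      then have "(j, b) \<in> E\<^sup>*" using that(3) by (auto simp: R_def)
      then show False using that(4) by (auto simp: R_def)
    qed
    then show ?thesis by (auto simp: U_def V_def)
  qed
  moreover have "U \<inter> S \<noteq> {}"
  proof -
    have "j \<in> R" using j by (simp add: R_def)
    then show ?thesis using ne[OF j] j unfolding U_def SU by blast
  qed
  ultimately have "\<not> V \<inter> S \<noteq> {}"
  proof -
    assume a: "closed U" "closed V" "S \<subseteq> U \<union> V" "U \<inter> V \<inter> S = {}" "U \<inter> S \<noteq> {}"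
    show ?thesis
    proof
      assume "V \<inter> S \<noteq> {}"
      with a have "\<exists>A B. closed A \<and> closed B \<and> S \<subseteq> A \<union> B \<and> A \<inter> B \<inter> S = {} \<and> A \<inter> S \<noteq> {} \<and> B \<inter> S \<noteq> {}"
        by (intro exI[of _ U] exI[of _ V]) simp
      with conn show False unfolding connected_closed by (elim notE)
    qed
  qed
  then have "V = {}" by (auto simp: V_def SU)
  then have "i \<in> R" using i ne by (auto simp: V_def)
  then have "(j, i) \<in> E\<^sup>*" by (simp add: R_def)
  then obtain m where m: "m \<le> card E" "(j, i) \<in> E ^^ m" using rtrancl_finite_eq_relpow[OF fE] by auto
  have "h i \<le> c ^ m * h j" using pow[OF m(2)] by simp
  also have "\<dots> \<le> c ^ (n * n) * h j" using c1 hpos[OF j] m(1) cE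
    by (intro mult_right_mono power_increasing) auto
  finally show ?thesis .
qed


lemma simplex_facts:
  fixes x :: "'a::euclidean_space"
  assumes fQ: "finite Q" and cQ: "card Q \<le> DIM('a)"
    and reg: "insphere_diam (interior (convex hull (insert x Q))) \<noteq> 0"
      "diameter (interior (convex hull (insert x Q))) / insphere_diam (interior (convex hull (insert x Q))) \<le> \<theta>"
  defines "T \<equiv> interior (convex hull (insert x Q))"
  shows "\<exists>c r. ball c r \<subseteq> T \<and> r > 0 \<and> diameter T \<le> 4 * \<theta> * r \<and> \<theta> \<ge> 1
     \<and> (\<forall>p\<in>convex hull (insert x Q). dist x p \<le> diameter T)
     \<and> (\<forall>p\<in>convex hull Q. diameter T \<le> 2 * \<theta> * dist x p)"
proof -
  have cpt: "compact (convex hull (insert x Q))" using fQ by (simp add: finite_imp_compact_convex_hull)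
  have bT: "bounded T" unfolding T_def using cpt by (simp add: bounded_interior compact_imp_bounded)
  obtain c r where cr: "ball c r \<subseteq> T" "r > 0" "4 * r > insphere_diam T" "insphere_diam T > 0"
     "insphere_diam T \<le> diameter T"
    using reg_ball[OF bT] reg(1) unfolding T_def by blast
  have rt: "diameter T / insphere_diam T \<le> \<theta>" using reg(2) by (simp add: T_def)
  then have hT: "diameter T \<le> \<theta> * insphere_diam T" using cr(4) by (simp add: divide_le_eq)
  have th1: "\<theta> \<ge> 1"
  proof -
    have "1 \<le> diameter T / insphere_diam T" using cr(4,5) by simp
    then show ?thesis using rt by linarith
  qed
  have "diameter T \<le> \<theta> * (4 * r)" using hT cr(3) th1 by (smt (verit) mult_left_mono)
  then have d4: "diameter T \<le> 4 * \<theta> * r" by simp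
  have "T \<noteq> {}" using cr(1,2) by auto
  then have clT: "closure T = convex hull (insert x Q)" unfolding T_def
    using convex_closure_interior[of "convex hull (insert x Q)"] cpt
    by (simp add: closure_closed compact_imp_closed)
  have dT: "diameter T = diameter (convex hull (insert x Q))"
    using diameter_closure[OF bT] clT by simp
  have A: "\<forall>p\<in>convex hull (insert x Q). dist x p \<le> diameter T"
    using dT diameter_bounded_bound[of "convex hull (insert x Q)" x] cpt compact_imp_bounded
      hull_subset[of "insert x Q"] by auto
  have B: "\<forall>p\<in>convex hull Q. diameter T \<le> 2 * \<theta> * dist x p"
  proof
    fix p assume p: "p \<in> convex hull Q"
    have "ball c r \<subseteq> convex hull (insert x Q)" using cr(1) interior_subset unfolding T_def by blast
    then have "2 * r \<le> dist x p" using far_face[OF fQ cQ _ cr(2) p] by blast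
    then have "(2 * \<theta>) * (2 * r) \<le> (2 * \<theta>) * dist x p" using th1 by (intro mult_left_mono) auto
    then have "4 * \<theta> * r \<le> 2 * \<theta> * dist x p" by (simp add: algebra_simps)
    then show "diameter T \<le> 2 * \<theta> * dist x p" using d4 by linarith
  qed
  show ?thesis using cr(1,2) d4 th1 A B by blast
qed

lemma core:
  fixes K :: "'a::euclidean_space set" and I :: "'a set set"
  assumes st: "starK K x" and dim: "2 \<le> DIM('a)" and fI: "finite I" and cI: "card I \<le> n"
    and QI: "\<And>Q. Q \<in> I \<Longrightarrow> finite Q \<and> Q \<noteq> {} \<and> card Q \<le> DIM('a)"
    and fr: "frontier K = \<Union>((\<lambda>Q. convex hull Q) ` I)"
    and reg: "\<And>Q. Q \<in> I \<Longrightarrow> insphere_diam (interior (convex hull (insert x Q))) \<noteq> 0 \<and>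
      diameter (interior (convex hull (insert x Q))) / insphere_diam (interior (convex hull (insert x Q))) \<le> \<theta>"
    and Q0: "Q0 \<in> I"
  shows "measure lebesgue K \<le> (2 * \<theta>) ^ (n * n * DIM('a)) * (4 * \<theta>) ^ DIM('a)
           * measure lebesgue (interior (convex hull (insert x Q0)))"
proof -
  interpret starK K x by (rule st)
  define h where "h Q = diameter (interior (convex hull (insert x Q)))" for Q
  have SF: "\<exists>c r. ball c r \<subseteq> interior (convex hull (insert x Q)) \<and> r > 0 \<and> h Q \<le> 4 * \<theta> * r \<and> \<theta> \<ge> 1
     \<and> (\<forall>p\<in>convex hull (insert x Q). dist x p \<le> h Q)
     \<and> (\<forall>p\<in>convex hull Q. h Q \<le> 2 * \<theta> * dist x p)" if "Q \<in> I" for Q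
    unfolding h_def using simplex_facts[of Q x \<theta>] QI[OF that] reg[OF that] by blast
  have th1: "\<theta> \<ge> 1" using SF[OF Q0] by blast
  have hpos: "h Q \<ge> 0" if "Q \<in> I" for Q
    unfolding h_def by (rule diameter_ge_0) (meson QI[OF that] bounded_convex_hull bounded_interior finite_imp_bounded bounded_insert)
  have chain: "h Q \<le> (2 * \<theta>) ^ (n * n) * h Q0" if Q: "Q \<in> I" for Q
  proof (rule chain_bound[of "frontier K" "\<lambda>Q. convex hull Q" I h "2 * \<theta>" Q Q0 n])
    show "connected (frontier K)" using connK conn_compl[OF dim] by (rule connected_frontier_simple)
    show "frontier K = \<Union>((\<lambda>Q. convex hull Q) ` I)" by (rule fr)
    show "closed (convex hull Q)" if "Q \<in> I" for Q using QI[OF that]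
      by (simp add: compact_imp_closed finite_imp_compact_convex_hull)
    show "convex hull Q \<noteq> {}" if "Q \<in> I" for Q using QI[OF that] by simp
    show "h Q1 \<le> 2 * \<theta> * h Q2" if adjQ: "Q1 \<in> I" "Q2 \<in> I" "convex hull Q1 \<inter> convex hull Q2 \<noteq> {}" for Q1 Q2
    proof -
      obtain p where p: "p \<in> convex hull Q1" "p \<in> convex hull Q2" using adjQ(3) by blast
      have "h Q1 \<le> 2 * \<theta> * dist x p" using SF[OF adjQ(1)] p(1) by blast
      also have "\<dots> \<le> 2 * \<theta> * h Q2"
      proof -
        have "p \<in> convex hull (insert x Q2)" using p(2) hull_mono[of Q2 "insert x Q2"] by blast
        then have "dist x p \<le> h Q2" using SF[OF adjQ(2)] by blast
        then show ?thesis using th1 by (intro mult_left_mono) auto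
      qed
      finally show ?thesis .
    qed
  qed (use fI th1 hpos Q Q0 cI in auto)
  obtain z where z: "z \<in> frontier K" "\<forall>y\<in>K. dist x y \<le> dist x z" using farthest by blast
  then obtain Qs where Qs: "Qs \<in> I" "z \<in> convex hull Qs" using fr by auto
  define Rr where "Rr = (2 * \<theta>) ^ (n * n) * h Q0"
  have "z \<in> convex hull (insert x Qs)" using Qs(2) hull_mono[of Qs "insert x Qs"] by blast
  then have "dist x z \<le> h Qs" using SF[OF Qs(1)] by blast
  also have "\<dots> \<le> Rr" unfolding Rr_def by (rule chain[OF Qs(1)])
  finally have zR: "dist x z \<le> Rr" .
  have Rr0: "Rr \<ge> 0" unfolding Rr_def using th1 hpos[OF Q0] by simp
  have Ksub: "K \<subseteq> cball x Rr" using z(2) zR by auto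
  have "measure lebesgue K \<le> measure lebesgue (cball x Rr)"
    by (rule measure_mono_fmeasurable[OF Ksub]) (auto simp: opn borel_open)
  also have "\<dots> = unit_ball_vol (DIM('a)) * Rr ^ DIM('a)"
    using content_cball[OF Rr0] by (simp add: measure_completion)
  finally have mK: "measure lebesgue K \<le> unit_ball_vol (DIM('a)) * Rr ^ DIM('a)" .
  obtain c r where cr: "ball c r \<subseteq> interior (convex hull (insert x Q0))" "r > 0" "h Q0 \<le> 4 * \<theta> * r"
    using SF[OF Q0] by blast
  have bT: "bounded (interior (convex hull (insert x Q0)))"
    using QI[OF Q0] by (meson bounded_convex_hull bounded_interior finite_imp_bounded bounded_insert)
  have "unit_ball_vol (DIM('a)) * r ^ DIM('a) = measure lebesgue (ball c r)"
    using content_ball[of r c] cr(2) by (simp add: measure_completion)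
  also have "\<dots> \<le> measure lebesgue (interior (convex hull (insert x Q0)))"
    by (rule measure_mono_fmeasurable[OF cr(1)]) (auto intro: lmeasurable_open bT)
  finally have mT: "unit_ball_vol (DIM('a)) * r ^ DIM('a) \<le> measure lebesgue (interior (convex hull (insert x Q0)))" .
  have "Rr \<le> (2 * \<theta>) ^ (n * n) * (4 * \<theta> * r)"
    unfolding Rr_def using cr(3) th1 by (intro mult_left_mono) auto
  then have "Rr ^ DIM('a) \<le> ((2 * \<theta>) ^ (n * n) * (4 * \<theta> * r)) ^ DIM('a)"
    using Rr0 by (intro power_mono) auto
  also have "\<dots> = (2 * \<theta>) ^ (n * n * DIM('a)) * (4 * \<theta>) ^ DIM('a) * r ^ DIM('a)"
    by (simp add: power_mult_distrib power_mult)
  finally have "unit_ball_vol (DIM('a)) * Rr ^ DIM('a) \<le>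
      (2 * \<theta>) ^ (n * n * DIM('a)) * (4 * \<theta>) ^ DIM('a) * (unit_ball_vol (DIM('a)) * r ^ DIM('a))"
    by (simp add: mult_left_mono algebra_simps)
  also have "\<dots> \<le> (2 * \<theta>) ^ (n * n * DIM('a)) * (4 * \<theta>) ^ DIM('a) * measure lebesgue (interior (convex hull (insert x Q0)))"
    using mT th1 by (intro mult_left_mono) auto
  finally show ?thesis using mK by linarith
qed

lemma (in starK) hull_in_closure:
  assumes "convex hull Q \<subseteq> closure K" "Q \<noteq> {}"
  shows "convex hull (insert x Q) \<subseteq> closure K"
  using assms closure_seg by (auto simp: convex_hull_insert_segments)

lemma disc_facts:
  fixes \<Omega> :: "'a::euclidean_space set"
  assumes "discretization \<Omega> M F FK Vf Ef xK xf \<beta>"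
  shows "finite M" "finite F" "F = \<Union>(FK ` M)" "\<forall>\<sigma>\<in>F. finite (Vf \<sigma>)"
    "\<forall>K\<in>M. open_polyhedral K \<and> K \<noteq> {}" "pairwise disjnt M" "closure \<Omega> = \<Union>(closure ` M)"
    "bounded \<Omega>"
    "\<forall>K\<in>M. xK K \<in> K \<and> (\<forall>y\<in>K. closed_segment (xK K) y \<subseteq> K)"
    "\<forall>K\<in>M. frontier K = \<Union>(closure ` FK K)"
    "DIM('a) = 2 \<Longrightarrow> \<forall>\<sigma>\<in>F. \<exists>a b. a \<noteq> b \<and> Vf \<sigma> = {a, b} \<and> \<sigma> = open_segment a b"
    "DIM('a) = 3 \<Longrightarrow> \<forall>\<sigma>\<in>F. finite (Ef \<sigma>) \<and> (\<forall>e\<in>Ef \<sigma>. e \<subseteq> Vf \<sigma> \<and> card e = 2) \<and>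
           closure \<sigma> = \<Union>{convex hull (insert (xf \<sigma>) e) | e. e \<in> Ef \<sigma>}"
  using assms unfolding discretization_def by (meson; fail)+

lemma ell_bounds:
  assumes D: "discretization \<Omega> M F FK Vf Ef xK xf \<beta>" and l: "ell_D M F FK Vf \<le> l" and K: "K \<in> M"
  shows "card (FK K) \<le> l" "card (cell_vertices FK Vf K) \<le> l" "finite (FK K)"
    "finite (cell_vertices FK Vf K)"
proof -
  have fM: "finite M" and fF: "finite F" and FU: "F = \<Union>(FK ` M)"
    and fV: "\<forall>\<sigma>\<in>F. finite (Vf \<sigma>)"
    using disc_facts(1,2,3,4)[OF D] by auto
  have fUV: "finite (\<Union>(Vf ` F))" using fF fV by auto
  define S where "S = (\<lambda>K. card (cell_vertices FK Vf K)) ` M \<union>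
       (\<lambda>s. card (cells_of_vertex M FK Vf s)) ` (\<Union>(Vf ` F)) \<union> (\<lambda>K. card (FK K)) ` M"
  have fS: "finite S" using fM fUV by (simp add: S_def)
  have MS: "Max S \<le> l" using l by (simp add: ell_D_def S_def)
  have "card (FK K) \<in> S" using K by (simp add: S_def)
  then show "card (FK K) \<le> l" using Max_ge[OF fS] MS by (meson le_trans)
  have "card (cell_vertices FK Vf K) \<in> S" using K by (simp add: S_def)
  then show "card (cell_vertices FK Vf K) \<le> l" using Max_ge[OF fS] MS by (meson le_trans)
  show fFK: "finite (FK K)" using fF FU K by (metis Sup_upper finite_subset image_eqI)
  have "FK K \<subseteq> F" using FU K by auto
  then show "finite (cell_vertices FK Vf K)" using fFK fV by (auto simp: cell_vertices_def)
qed

lemma cell_data: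
  fixes \<Omega> :: "'a::euclidean_space set"
  assumes D: "discretization \<Omega> M F FK Vf Ef xK xf \<beta>" and l: "ell_D M F FK Vf \<le> l" and K: "K \<in> M"
    and dim: "DIM('a) = 2 \<or> DIM('a) = 3"
  shows "\<exists>I. finite I \<and> card I \<le> l * 2 ^ l \<and> (\<forall>Q\<in>I. finite Q \<and> Q \<noteq> {} \<and> card Q \<le> DIM('a)) \<and>
     frontier K = \<Union>((\<lambda>Q. convex hull Q) ` I) \<and>
     submesh_cell xK FK Vf Ef xf K = (\<lambda>Q. interior (convex hull (insert (xK K) Q))) ` I"
proof -
  have FU: "F = \<Union>(FK ` M)" and frK: "frontier K = \<Union>(closure ` FK K)"
    using disc_facts(3,10)[OF D] K by auto
  have FKF: "FK K \<subseteq> F" using FU K by auto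
  note eb = ell_bounds[OF D l K]
  have l2: "l \<le> l * 2 ^ l" by simp
  show ?thesis
  proof (cases "DIM('a) = 2")
    case True
    have seg: "\<forall>\<sigma>\<in>F. \<exists>a b. a \<noteq> b \<and> Vf \<sigma> = {a, b} \<and> \<sigma> = open_segment a b"
      using disc_facts(11)[OF D True] .
    define I where "I = Vf ` FK K"
    have "finite I" using eb by (simp add: I_def)
    moreover have "card I \<le> l * 2 ^ l" using card_image_le[OF eb(3), of Vf] eb(1) l2 unfolding I_def by linarith
    moreover have "\<forall>Q\<in>I. finite Q \<and> Q \<noteq> {} \<and> card Q \<le> DIM('a)"
    proof
      fix Q assume "Q \<in> I"
      then obtain \<sigma> where "\<sigma> \<in> FK K" "Q = Vf \<sigma>" by (auto simp: I_def)
      then obtain a b where "a \<noteq> b" "Q = {a, b}" using seg FKF by blast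
      then show "finite Q \<and> Q \<noteq> {} \<and> card Q \<le> DIM('a)" using True by simp
    qed
    moreover have "frontier K = \<Union>((\<lambda>Q. convex hull Q) ` I)"
    proof -
      have "closure \<sigma> = convex hull (Vf \<sigma>)" if "\<sigma> \<in> FK K" for \<sigma>
      proof -
        have "\<sigma> \<in> F" using FKF that by blast
        then obtain a b where ab: "a \<noteq> b" "Vf \<sigma> = {a, b}" "\<sigma> = open_segment a b" using seg by blast
        have "closure \<sigma> = closed_segment a b" using ab(1) by (simp add: ab(3))
        then show ?thesis by (simp add: ab(2) segment_convex_hull)
      qed
      then have "closure ` FK K = (\<lambda>Q. convex hull Q) ` I" unfolding I_def image_comp
        by (intro image_cong) auto
      then show ?thesis using frK by simp
    qed
    moreover have "submesh_cell xK FK Vf Ef xf K = (\<lambda>Q. interior (convex hull (insert (xK K) Q))) ` I"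
    proof -
      have "submesh_cell xK FK Vf Ef xf K = {interior (convex hull (insert (xK K) (Vf \<sigma>))) | \<sigma>. \<sigma> \<in> FK K}"
        using True by (simp add: submesh_cell_def)
      also have "\<dots> = (\<lambda>Q. interior (convex hull (insert (xK K) Q))) ` I" unfolding I_def by blast
      finally show ?thesis .
    qed
    ultimately show ?thesis by (intro exI[of _ I] conjI) assumption+
  next
    case False
    then have d3: "DIM('a) = 3" using dim by simp
    have E: "\<forall>\<sigma>\<in>F. finite (Ef \<sigma>) \<and> (\<forall>e\<in>Ef \<sigma>. e \<subseteq> Vf \<sigma> \<and> card e = 2) \<and>
           closure \<sigma> = \<Union>{convex hull (insert (xf \<sigma>) e) | e. e \<in> Ef \<sigma>}"
      using disc_facts(12)[OF D d3] .
    have E1: "\<And>\<sigma> e. \<sigma> \<in> FK K \<Longrightarrow> e \<in> Ef \<sigma> \<Longrightarrow> e \<subseteq> Vf \<sigma> \<and> card e = 2"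
      using E FKF by blast
    have E2: "\<And>\<sigma>. \<sigma> \<in> FK K \<Longrightarrow> closure \<sigma> = \<Union>{convex hull (insert (xf \<sigma>) e) | e. e \<in> Ef \<sigma>}"
      using E FKF by blast
    define P where "P = (SIGMA \<sigma>:FK K. Ef \<sigma>)"
    define I where "I = (\<lambda>(\<sigma>, e). insert (xf \<sigma>) e) ` P"
    have PS: "P \<subseteq> FK K \<times> Pow (cell_vertices FK Vf K)"
    proof
      fix pr assume "pr \<in> P"
      then obtain \<sigma> e where pr: "pr = (\<sigma>, e)" "\<sigma> \<in> FK K" "e \<in> Ef \<sigma>" by (auto simp: P_def)
      then have "e \<subseteq> Vf \<sigma>" using E1 by blast
      then have "e \<subseteq> cell_vertices FK Vf K" using pr(2) unfolding cell_vertices_def by blast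
      then show "pr \<in> FK K \<times> Pow (cell_vertices FK Vf K)" using pr by blast
    qed
    have "finite (FK K \<times> Pow (cell_vertices FK Vf K))" using eb(3,4) by simp
    then have fP: "finite P" using PS by (rule finite_subset[rotated])
    have "finite I" using fP by (simp add: I_def)
    moreover have "card I \<le> l * 2 ^ l"
    proof -
      have "card I \<le> card P" unfolding I_def using fP by (rule card_image_le)
      also have "\<dots> \<le> card (FK K \<times> Pow (cell_vertices FK Vf K))"
        using PS eb(3,4) by (intro card_mono) auto
      also have "\<dots> = card (FK K) * 2 ^ card (cell_vertices FK Vf K)"
        using eb(4) by (simp add: card_cartesian_product card_Pow)
      also have "\<dots> \<le> l * 2 ^ l" using eb(1,2) by (intro mult_le_mono power_increasing) auto
      finally show ?thesis .
    qed
    moreover have "\<forall>Q\<in>I. finite Q \<and> Q \<noteq> {} \<and> card Q \<le> DIM('a)"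
    proof
      fix Q assume "Q \<in> I"
      then obtain \<sigma> e where se: "\<sigma> \<in> FK K" "e \<in> Ef \<sigma>" "Q = insert (xf \<sigma>) e" by (auto simp: I_def P_def)
      then have ce: "card e = 2" using E1 by blast
      then have fe: "finite e" by (intro card_ge_0_finite) simp
      have "card Q \<le> Suc (card e)" using se(3) fe by (simp add: card_insert_le_m1)
      then show "finite Q \<and> Q \<noteq> {} \<and> card Q \<le> DIM('a)" using se(3) fe ce d3 by simp
    qed
    moreover have "frontier K = \<Union>((\<lambda>Q. convex hull Q) ` I)"
    proof -
      have "\<Union>(closure ` FK K) = \<Union>((\<lambda>Q. convex hull Q) ` I)"
      proof
        show "\<Union>(closure ` FK K) \<subseteq> \<Union>((\<lambda>Q. convex hull Q) ` I)"
        proof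
          fix p assume "p \<in> \<Union>(closure ` FK K)"
          then obtain \<sigma> where s: "\<sigma> \<in> FK K" "p \<in> closure \<sigma>" by auto
          then obtain e where e: "e \<in> Ef \<sigma>" "p \<in> convex hull (insert (xf \<sigma>) e)" using E2[OF s(1)] by blast
          have "insert (xf \<sigma>) e \<in> I" unfolding I_def P_def
            by (rule image_eqI[of _ _ "(\<sigma>, e)"]) (use s(1) e(1) in auto)
          then show "p \<in> \<Union>((\<lambda>Q. convex hull Q) ` I)" using e(2) by blast
        qed
        show "\<Union>((\<lambda>Q. convex hull Q) ` I) \<subseteq> \<Union>(closure ` FK K)"
        proof
          fix p assume "p \<in> \<Union>((\<lambda>Q. convex hull Q) ` I)"
          then obtain \<sigma> e where s: "\<sigma> \<in> FK K" "e \<in> Ef \<sigma>" "p \<in> convex hull (insert (xf \<sigma>) e)"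
            by (auto simp: I_def P_def)
          then have "p \<in> closure \<sigma>" using E2[OF s(1)] by blast
          then show "p \<in> \<Union>(closure ` FK K)" using s(1) by auto
        qed
      qed
      then show ?thesis using frK by simp
    qed
    moreover have "submesh_cell xK FK Vf Ef xf K = (\<lambda>Q. interior (convex hull (insert (xK K) Q))) ` I"
    proof -
      have "submesh_cell xK FK Vf Ef xf K = {interior (convex hull (insert (xK K) (insert (xf \<sigma>) e))) | \<sigma> e. \<sigma> \<in> FK K \<and> e \<in> Ef \<sigma>}"
        using False by (simp add: submesh_cell_def)
      also have "\<dots> = (\<lambda>Q. interior (convex hull (insert (xK K) Q))) ` I" unfolding I_def P_def by force
      finally show ?thesis .
    qed
    ultimately show ?thesis by (intro exI[of _ I] conjI) assumption+
  qed
qed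

theorem lemmaA4:
  fixes \<theta> :: real and l :: nat
  assumes "DIM('a::euclidean_space) = 2 \<or> DIM('a) = 3"
  shows "\<exists>C::real. \<forall>(\<Omega>::'a set) M F FK Vf Ef xK xf \<beta>.
     discretization \<Omega> M F FK Vf Ef xK xf \<beta> \<and>
     mesh_regularity (submesh M xK FK Vf Ef xf) \<le> ereal \<theta> \<and>
     ell_D M F FK Vf \<le> l \<longrightarrow>
     (\<forall>K\<in>M. \<forall>T\<in>submesh M xK FK Vf Ef xf. T \<subseteq> K \<longrightarrow>
        measure lebesgue T \<le> measure lebesgue K \<and>
        measure lebesgue K \<le> C * measure lebesgue T)"
proof -
  define N where "N = l * 2 ^ l"
  have dim2: "2 \<le> DIM('a)" using assms by auto
  show ?thesis
  proof (intro exI[of _ "(2 * \<theta>) ^ (N * N * DIM('a)) * (4 * \<theta>) ^ DIM('a)"] allI impI ballI)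
    fix \<Omega> :: "'a set" and M F FK Vf Ef xK xf \<beta> K T
    assume H: "discretization \<Omega> M F FK Vf Ef xK xf \<beta> \<and>
     mesh_regularity (submesh M xK FK Vf Ef xf) \<le> ereal \<theta> \<and> ell_D M F FK Vf \<le> l"
      and K: "K \<in> M" and T: "T \<in> submesh M xK FK Vf Ef xf" and TK: "T \<subseteq> K"
    have D: "discretization \<Omega> M F FK Vf Ef xK xf \<beta>"
      and mr: "mesh_regularity (submesh M xK FK Vf Ef xf) \<le> ereal \<theta>"
      and el: "ell_D M F FK Vf \<le> l" using H by auto
    obtain K' where K': "K' \<in> M" "T \<in> submesh_cell xK FK Vf Ef xf K'"
      using T by (auto simp: submesh_def)
    obtain I where I: "finite I" "card I \<le> N" "\<forall>Q\<in>I. finite Q \<and> Q \<noteq> {} \<and> card Q \<le> DIM('a)"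
      "frontier K' = \<Union>((\<lambda>Q. convex hull Q) ` I)"
      "submesh_cell xK FK Vf Ef xf K' = (\<lambda>Q. interior (convex hull (insert (xK K') Q))) ` I"
      using cell_data[OF D el K'(1) assms] unfolding N_def by blast
    obtain Q where Q: "Q \<in> I" "T = interior (convex hull (insert (xK K') Q))" using K'(2) I(5) by auto
    have polyK: "\<And>K. K \<in> M \<Longrightarrow> open_polyhedral K \<and> K \<noteq> {}" using disc_facts(5)[OF D] by blast
    have opK: "\<And>K. K \<in> M \<Longrightarrow> open K" using polyK by (simp add: open_polyhedral_def)
    have bO: "bounded (closure \<Omega>)" using disc_facts(8)[OF D] by (simp add: bounded_closure)
    have bK: "\<And>K. K \<in> M \<Longrightarrow> bounded K"
    proof -
      fix K assume "K \<in> M"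
      then have "closure K \<subseteq> closure \<Omega>" using disc_facts(7)[OF D] by blast
      then show "bounded K" using bO closure_subset by (meson bounded_subset)
    qed
    have st: "starK K' (xK K')"
      using opK[OF K'(1)] bK[OF K'(1)] disc_facts(9)[OF D] K'(1) by (unfold_locales) auto
    have regI: "\<And>Q. Q \<in> I \<Longrightarrow> insphere_diam (interior (convex hull (insert (xK K') Q))) \<noteq> 0 \<and>
      diameter (interior (convex hull (insert (xK K') Q))) / insphere_diam (interior (convex hull (insert (xK K') Q))) \<le> \<theta>"
    proof -
      fix Q assume "Q \<in> I"
      then have "interior (convex hull (insert (xK K') Q)) \<in> submesh M xK FK Vf Ef xf"
        using I(5) K'(1) by (auto simp: submesh_def)
      then show "?thesis Q" by (rule reg_of_mesh[OF mr])
    qed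
    have main: "measure lebesgue K' \<le> (2 * \<theta>) ^ (N * N * DIM('a)) * (4 * \<theta>) ^ DIM('a) * measure lebesgue T"
      unfolding Q(2) by (rule core[OF st dim2 I(1,2) _ I(4) regI Q(1)]) (use I(3) in blast)+
    have Tne: "T \<noteq> {}"
    proof -
      obtain c r where "ball c r \<subseteq> interior (convex hull (insert (xK K') Q))" "r > 0"
        using simplex_facts[of Q "xK K'" \<theta>] I(3) Q(1) regI[OF Q(1)] by blast
      then show ?thesis using Q(2) by auto
    qed
    have "T \<subseteq> closure K'"
    proof -
      have fc: "frontier K' \<subseteq> closure K'" by (auto simp: frontier_def)
      have "convex hull Q \<subseteq> closure K'" using I(4) Q(1) fc by blast
      then have "convex hull (insert (xK K') Q) \<subseteq> closure K'"
        using starK.hull_in_closure[OF st] I(3) Q(1) by blast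
      then show ?thesis using Q(2) interior_subset by blast
    qed
    have KK: "K' = K"
    proof (rule ccontr)
      assume "K' \<noteq> K"
      then have "K \<inter> K' = {}" using disc_facts(6)[OF D] K K'(1) by (auto simp: pairwise_def disjnt_def)
      then have "K \<inter> closure K' = {}" using open_Int_closure_eq_empty[OF opK[OF K]] by blast
      then show False using TK \<open>T \<subseteq> closure K'\<close> Tne by blast
    qed
    have "measure lebesgue T \<le> measure lebesgue K"
      by (rule measure_mono_fmeasurable[OF TK]) (auto simp: Q(2) intro: lmeasurable_open opK[OF K] bK[OF K])
    then show "measure lebesgue T \<le> measure lebesgue K \<and>
        measure lebesgue K \<le> (2 * \<theta>) ^ (N * N * DIM('a)) * (4 * \<theta>) ^ DIM('a) * measure lebesgue T"
      using main KK by simp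
  qed
qed
end
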